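(* Let $\mathcal K$ be a simplicial complex on $[m]$, and let $\mathcal L$ be the simplicial complex on $[m+1]$ given by $$\mathcal L=\{\,I: I\subset[m]\,\}\ \cup\ \{\,I\cup\{m+1\}: I\in\mathcal K\,\}$$ (the union of the full simplex on $[m]$ and the cone over $\mathcal K$ with apex $m+1$). Then there is a homotopy equivalence $U(\mathcal K)\simeq D(\mathcal L)$, where $D(\mathcal L)\subset\mathbb C^{m+1}$. The same holds for real arrangement complements: $U_{\mathbb R}(\mathcal K)\simeq D_{\mathbb R}(\mathcal L)$.
   Context: A simplicial complex on a finite set $V$ is a collection of subsets of $V$ containing $\varnothing$ and closed under taking subsets. For a simplicial complex $\mathcal K$ on $[n]$ and $I=\{i_1,\dots,i_k\}\subset[n]$ let $C_I=\{z\in\mathbb C^n: z_{i_1}=\dots=z_{i_k}=0\}$ and $D_I=\{z\in\mathbb C^n: z_{i_1}=\dots=z_{i_k}\}$; set $U(\mathcal K)=\mathbb C^n\setminus\bigcup_{I\notin\mathcal K}C_I$ and $D(\mathcal K)=\mathbb C^n\setminus\bigcup_{I\notin\mathcal K}D_I$. $U_{\mathbb R}$ and $D_{\mathbb R}$ are defined analogously in $\mathbb R^n$. *)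

theory Defs
  imports "HOL-Analysis.Analysis"
begin

definition simplicial_complex :: "nat set \<Rightarrow> nat set set \<Rightarrow> bool" where
  "simplicial_complex V K \<longleftrightarrow> K \<subseteq> Pow V \<and> {} \<in> K \<and> (\<forall>I\<in>K. \<forall>J. J \<subseteq> I \<longrightarrow> J \<in> K)"

definition coord_space :: "nat \<Rightarrow> (nat \<Rightarrow> 'a::zero) set" where
  "coord_space n = {z. \<forall>i. i \<notin> {1..n} \<longrightarrow> z i = 0}"

definition coord_top :: "nat \<Rightarrow> (nat \<Rightarrow> 'a::{zero,topological_space}) topology" where
  "coord_top n = subtopology (product_topology (\<lambda>i. euclidean) UNIV) (coord_space n)"

definition C_sub :: "nat \<Rightarrow> nat set \<Rightarrow> (nat \<Rightarrow> 'a::zero) set" where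
  "C_sub n I = {z \<in> coord_space n. \<forall>i\<in>I. z i = 0}"

definition D_sub :: "nat \<Rightarrow> nat set \<Rightarrow> (nat \<Rightarrow> 'a::zero) set" where
  "D_sub n I = {z \<in> coord_space n. \<forall>i\<in>I. \<forall>j\<in>I. z i = z j}"

definition U_compl :: "nat \<Rightarrow> nat set set \<Rightarrow> (nat \<Rightarrow> 'a::zero) set" where
  "U_compl n K = coord_space n - (\<Union>I\<in>{I. I \<subseteq> {1..n} \<and> I \<notin> K}. C_sub n I)"

definition D_compl :: "nat \<Rightarrow> nat set set \<Rightarrow> (nat \<Rightarrow> 'a::zero) set" where
  "D_compl n K = coord_space n - (\<Union>I\<in>{I. I \<subseteq> {1..n} \<and> I \<notin> K}. D_sub n I)"

definition cone_ext :: "nat \<Rightarrow> nat set set \<Rightarrow> nat set set" where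
  "cone_ext m K = {I. I \<subseteq> {1..m}} \<union> {insert (Suc m) I | I. I \<in> K}"

end

theory Submission
  imports Defs
begin

lemma cm_scaleR_aux:
  fixes g :: "'x \<Rightarrow> 'b::real_normed_vector"
  shows "continuous_map X euclidean f \<Longrightarrow> continuous_map X euclidean g
    \<Longrightarrow> continuous_map X euclidean (\<lambda>x. f x *\<^sub>R g x)"
  by (simp add: continuous_map_atin tendsto_scaleR)

lemma topspace_sub_coord: "topspace (subtopology (coord_top n) S) = coord_space n \<inter> S"
  by (simp add: coord_top_def)

lemma cm_into_coord:
  assumes "\<And>k. continuous_map X euclidean (\<lambda>x. h x k)"
    and "\<And>x. x \<in> topspace X \<Longrightarrow> h x \<in> coord_space n \<inter> S"
  shows "continuous_map X (subtopology (coord_top n) S) h"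
  unfolding coord_top_def subtopology_subtopology continuous_map_in_subtopology
  using assms by (auto simp: continuous_map_componentwise_UNIV)

lemma cm_proj_coord: "continuous_map (subtopology (coord_top n) S) euclidean (\<lambda>z. z k)"
  unfolding coord_top_def subtopology_subtopology
  by (rule continuous_map_from_subtopology)
    (use continuous_map_product_projection[of k UNIV "\<lambda>i. euclidean"] in simp)

lemma U_mem:
  "w \<in> U_compl m K \<longleftrightarrow> w \<in> coord_space m \<and> (\<forall>I. I \<subseteq> {1..m} \<and> I \<notin> K \<longrightarrow> (\<exists>i\<in>I. w i \<noteq> 0))"
  unfolding U_compl_def C_sub_def by blast

lemma D_mem:
  fixes z :: "nat \<Rightarrow> 'a::zero"
  assumes sc: "simplicial_complex {1..m} K"
  shows "z \<in> D_compl (Suc m) (cone_ext m K) \<longleftrightarrow>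
     z \<in> coord_space (Suc m) \<and> (\<forall>I. I \<subseteq> {1..m} \<and> I \<notin> K \<longrightarrow> (\<exists>i\<in>I. z i \<noteq> z (Suc m)))"
proof
  have KP: "K \<subseteq> Pow {1..m}" using sc by (simp add: simplicial_complex_def)
  assume L: "z \<in> D_compl (Suc m) (cone_ext m K)"
  then have zc: "z \<in> coord_space (Suc m)" by (simp add: D_compl_def)
  show "z \<in> coord_space (Suc m) \<and> (\<forall>I. I \<subseteq> {1..m} \<and> I \<notin> K \<longrightarrow> (\<exists>i\<in>I. z i \<noteq> z (Suc m)))"
  proof (intro conjI zc allI impI)
    fix I assume I: "I \<subseteq> {1..m} \<and> I \<notin> K"
    define J where "J = insert (Suc m) I"
    have J1: "J \<subseteq> {1..Suc m}" using I by (auto simp: J_def)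
    have J2: "J \<notin> cone_ext m K"
    proof
      assume "J \<in> cone_ext m K"
      then consider "J \<subseteq> {1..m}" | I' where "I' \<in> K" "J = insert (Suc m) I'"
        unfolding cone_ext_def by blast
      then show False
      proof cases
        case 1 then show ?thesis by (auto simp: J_def)
      next
        case 2
        have "I' \<subseteq> {1..m}" using 2 KP by blast
        then have "I' = J - {Suc m}" using 2 by auto
        moreover have "I = J - {Suc m}" using I by (auto simp: J_def)
        ultimately show False using I 2 by simp
      qed
    qed
    have "z \<notin> D_sub (Suc m) J" using L J1 J2 unfolding D_compl_def by blast
    then obtain i j where ij: "i \<in> J" "j \<in> J" "z i \<noteq> z j" using zc by (auto simp: D_sub_def)
    have "z i \<noteq> z (Suc m) \<or> z j \<noteq> z (Suc m)" using ij(3) by auto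
    then obtain k where "k \<in> J" "z k \<noteq> z (Suc m)" using ij(1,2) by blast
    then show "\<exists>i\<in>I. z i \<noteq> z (Suc m)" by (auto simp: J_def)
  qed
next
  assume R: "z \<in> coord_space (Suc m) \<and> (\<forall>I. I \<subseteq> {1..m} \<and> I \<notin> K \<longrightarrow> (\<exists>i\<in>I. z i \<noteq> z (Suc m)))"
  show "z \<in> D_compl (Suc m) (cone_ext m K)"
    unfolding D_compl_def
  proof (rule DiffI)
    show "z \<in> coord_space (Suc m)" using R by simp
    show "z \<notin> (\<Union>I\<in>{I. I \<subseteq> {1..Suc m} \<and> I \<notin> cone_ext m K}. D_sub (Suc m) I)"
    proof
      assume "z \<in> (\<Union>I\<in>{I. I \<subseteq> {1..Suc m} \<and> I \<notin> cone_ext m K}. D_sub (Suc m) I)"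
      then obtain J where J1: "J \<subseteq> {1..Suc m}" and J2: "J \<notin> cone_ext m K"
        and zJ: "z \<in> D_sub (Suc m) J" by blast
      have sJ: "Suc m \<in> J"
      proof (rule ccontr)
        assume "Suc m \<notin> J"
        then have "J \<subseteq> {1..m}" using J1 by (auto simp: subset_iff le_Suc_eq)
        then show False using J2 by (simp add: cone_ext_def)
      qed
      define I where "I = J - {Suc m}"
      have I1: "I \<subseteq> {1..m}" using J1 by (auto simp: I_def subset_iff le_Suc_eq)
      have "J = insert (Suc m) I" using sJ by (auto simp: I_def)
      then have "I \<notin> K" using J2 unfolding cone_ext_def by blast
      then obtain i where i: "i \<in> I" "z i \<noteq> z (Suc m)" using R I1 by blast
      have "i \<in> J" using i(1) by (simp add: I_def)
      then show False using zJ sJ i(2) unfolding D_sub_def by blast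
    qed
  qed
qed

lemma main_he:
  fixes K :: "nat set set"
  assumes sc: "simplicial_complex {1..m} K"
  shows "(subtopology (coord_top m) (U_compl m K :: (nat \<Rightarrow> 'a::real_normed_vector) set))
           homotopy_equivalent_space (subtopology (coord_top (Suc m)) (D_compl (Suc m) (cone_ext m K) :: (nat \<Rightarrow> 'a) set))"
proof -
  let ?X = "subtopology (coord_top m) (U_compl m K :: (nat \<Rightarrow> 'a) set)"
  let ?Y = "subtopology (coord_top (Suc m)) (D_compl (Suc m) (cone_ext m K) :: (nat \<Rightarrow> 'a) set)"
  define f where "f = (\<lambda>w::nat\<Rightarrow>'a. w)"
  define g where "g = (\<lambda>(z::nat\<Rightarrow>'a) i. if i \<in> {1..m} then z i - z (Suc m) else 0)"
  define h where "h = (\<lambda>(t::real, z::nat\<Rightarrow>'a) i. if i \<in> {1..Suc m} then z i - t *\<^sub>R z (Suc m) else 0)"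
  have cf: "continuous_map ?X ?Y f"
  proof (rule cm_into_coord)
    show "continuous_map ?X euclidean (\<lambda>x. f x k)" for k
      unfolding f_def by (rule cm_proj_coord)
    fix w assume "w \<in> topspace ?X"
    then have "w \<in> U_compl m K"
      using topspace_sub_coord[of m "U_compl m K"] by blast
    then have w: "w \<in> coord_space m" "\<forall>I. I \<subseteq> {1..m} \<and> I \<notin> K \<longrightarrow> (\<exists>i\<in>I. w i \<noteq> 0)"
      using U_mem[of w m K] by blast+
    then have "w \<in> coord_space (Suc m)" "w (Suc m) = 0" by (auto simp: coord_space_def)
    then show "f w \<in> coord_space (Suc m) \<inter> D_compl (Suc m) (cone_ext m K)"
      using w by (simp add: f_def D_mem[OF sc])
  qed
  have cg: "continuous_map ?Y ?X g"
  proof (rule cm_into_coord)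
    show "continuous_map ?Y euclidean (\<lambda>x. g x k)" for k
    proof (cases "k \<in> {1..m}")
      case True
      have "continuous_map ?Y euclidean (\<lambda>z. z k - z (Suc m))"
        by (intro continuous_map_diff cm_proj_coord)
      then show ?thesis using True by (simp add: g_def)
    next
      case False
      then show ?thesis by (simp add: g_def False del: atLeastAtMost_iff)
    qed
    fix z assume "z \<in> topspace ?Y"
    then have "z \<in> D_compl (Suc m) (cone_ext m K)"
      using topspace_sub_coord[of "Suc m" "D_compl (Suc m) (cone_ext m K)"] by blast
    then have z: "z \<in> coord_space (Suc m)" "\<forall>I. I \<subseteq> {1..m} \<and> I \<notin> K \<longrightarrow> (\<exists>i\<in>I. z i \<noteq> z (Suc m))"
      using D_mem[OF sc, of z] by blast+
    have "g z \<in> coord_space m" unfolding coord_space_def g_def by simp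
    moreover have "\<exists>i\<in>I. g z i \<noteq> 0" if IK: "I \<subseteq> {1..m}" "I \<notin> K" for I
    proof -
      obtain i where i: "i \<in> I" "z i \<noteq> z (Suc m)" using z(2)[rule_format, OF conjI[OF IK]] by blast
      then have "i \<in> {1..m}" using IK by blast
      then have "g z i = z i - z (Suc m)" by (simp add: g_def)
      then have "g z i \<noteq> 0" using i(2) by simp
      then show ?thesis using i(1) by blast
    qed
    ultimately show "g z \<in> coord_space m \<inter> U_compl m K" using U_mem[of "g z" m K] by blast
  qed
  have hom1: "homotopic_with (\<lambda>x. True) ?X ?X (g \<circ> f) id"
  proof (rule homotopic_with_equal)
    show "continuous_map ?X ?X (g \<circ> f)" using cf cg by (rule continuous_map_compose)
    fix w assume "w \<in> topspace ?X"
    then have w: "w \<in> coord_space m" using topspace_sub_coord[of m "U_compl m K"] by blast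
    then have "w (Suc m) = 0" by (simp add: coord_space_def)
    then show "(g \<circ> f) w = id w" using w by (auto simp: g_def f_def coord_space_def fun_eq_iff)
  qed auto
  have cfst: "continuous_map (prod_topology (top_of_set {0..1::real}) ?Y) euclideanreal fst"
    using continuous_map_fst[of "top_of_set {0..1::real}" ?Y]
    by (simp add: continuous_map_in_subtopology)
  have csnd: "continuous_map (prod_topology (top_of_set {0..1::real}) ?Y) euclidean (\<lambda>p. snd p k)" for k
    using continuous_map_compose[OF continuous_map_snd cm_proj_coord, of "top_of_set {0..1::real}" "Suc m" "D_compl (Suc m) (cone_ext m K)" k]
    by (simp add: o_def)
  have hom2: "homotopic_with (\<lambda>x. True) ?Y ?Y id (f \<circ> g)"
    unfolding homotopic_with[where P="\<lambda>x. True", simplified]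
  proof (intro exI conjI ballI)
    show "continuous_map (prod_topology (top_of_set {0..1}) ?Y) ?Y h"
    proof (rule cm_into_coord)
      show "continuous_map (prod_topology (top_of_set {0..1}) ?Y) euclidean (\<lambda>x. h x k)" for k
      proof (cases "k \<in> {1..Suc m}")
        case True
        have "continuous_map (prod_topology (top_of_set {0..1}) ?Y) euclidean
               (\<lambda>p. snd p k - fst p *\<^sub>R snd p (Suc m))"
          by (intro continuous_map_diff cm_scaleR_aux csnd cfst)
        then show ?thesis using True by (simp add: h_def case_prod_beta)
      next
        case False
        then show ?thesis by (simp add: h_def case_prod_beta False del: atLeastAtMost_iff)
      qed
      fix p assume "p \<in> topspace (prod_topology (top_of_set {0..1::real}) ?Y)"
      then obtain t z where p: "p = (t, z)" and "z \<in> topspace ?Y"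
        by auto
      then have "z \<in> D_compl (Suc m) (cone_ext m K)"
        using topspace_sub_coord[of "Suc m" "D_compl (Suc m) (cone_ext m K)"] by blast
      then have z: "z \<in> coord_space (Suc m)" "\<forall>I. I \<subseteq> {1..m} \<and> I \<notin> K \<longrightarrow> (\<exists>i\<in>I. z i \<noteq> z (Suc m))"
        using D_mem[OF sc, of z] by blast+
      have "h (t, z) \<in> coord_space (Suc m)" unfolding coord_space_def h_def by simp
      moreover have "\<exists>i\<in>I. h (t, z) i \<noteq> h (t, z) (Suc m)" if IK: "I \<subseteq> {1..m}" "I \<notin> K" for I
      proof -
        obtain i where i: "i \<in> I" "z i \<noteq> z (Suc m)" using z(2)[rule_format, OF conjI[OF IK]] by blast
        then have "i \<in> {1..Suc m}" "i \<noteq> Suc m" using IK by auto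
        then have "h (t, z) i - h (t, z) (Suc m) = z i - z (Suc m)" by (simp add: h_def)
        then have "h (t, z) i \<noteq> h (t, z) (Suc m)" using i(2) by auto
        then show ?thesis using i(1) by blast
      qed
      ultimately show "h p \<in> coord_space (Suc m) \<inter> D_compl (Suc m) (cone_ext m K)"
        using D_mem[OF sc, of "h (t, z)"] p by blast
    qed
  next
    fix z assume "z \<in> topspace ?Y"
    then have z: "z \<in> coord_space (Suc m)"
      using topspace_sub_coord[of "Suc m" "D_compl (Suc m) (cone_ext m K)"] by blast
    then show "h (0, z) = id z" by (auto simp: h_def coord_space_def fun_eq_iff)
    show "h (1, z) = (f \<circ> g) z" using z
      by (auto simp: h_def f_def g_def coord_space_def fun_eq_iff le_Suc_eq)
  qed
  show ?thesis unfolding homotopy_equivalent_space_def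
    using cf cg hom1 hom2 homotopic_with_symD by blast
qed

theorem theorem4p1:
  fixes m :: nat and K :: "nat set set"
  assumes "simplicial_complex {1..m} K"
  shows "(subtopology (coord_top m) (U_compl m K :: (nat \<Rightarrow> complex) set))
           homotopy_equivalent_space (subtopology (coord_top (Suc m)) (D_compl (Suc m) (cone_ext m K) :: (nat \<Rightarrow> complex) set))
       \<and> (subtopology (coord_top m) (U_compl m K :: (nat \<Rightarrow> real) set))
           homotopy_equivalent_space (subtopology (coord_top (Suc m)) (D_compl (Suc m) (cone_ext m K) :: (nat \<Rightarrow> real) set))"
  using main_he[where 'a=complex, OF assms] main_he[where 'a=real, OF assms] by blast

end
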